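(* Under the assumptions below, if $\sigma_b \neq 0$ then \[ W_{\mathrm{out}} W_{\mathrm{in}} = U \Big(I_{m} - s^{-1} \big(I_m - B_1^{\dagger} B_1\big) B_2^\top B_2 \Big) B_1^{\dagger}, \qquad s = B_2 \big(I - B_1^{\dagger} B_1\big) B_2^\top \in \mathbb{R}. \] If $\sigma_b = 0$ then instead \[ W_{\mathrm{out}} W_{\mathrm{in}} = U B_1^{\dagger}. \]
   Context: Consider the untrained linear diagonal continuous-time reservoir $\dot{r}(t) = (-1 + \omega) r(t) + W_{\mathrm{in}} u(t) + \sigma_b \mathbf{1}_n$, with reservoir state $r(t)\in\mathbb{R}^n$, input $u(t)\in\mathbb{R}^d$, input matrix $W_{\mathrm{in}}\in\mathbb{R}^{n\times d}$, scalars $\omega<1$ and $\sigma_b\in\mathbb{R}$, and $\mathbf{1}_n$ the all-ones vector. The reservoir is driven by a training input $u$ on $[0,T]$ from $r(0)=0$, and snapshots are collected at equally spaced times $t_1,\dots,t_m\in[0,T]$ (spacing $h$) into $U=[u(t_1)\cdots u(t_m)]\in\mathbb{R}^{d\times m}$ and $R=[r(t_1)\cdots r(t_m)]\in\mathbb{R}^{n\times m}$ ($R$ assumed full row rank). The readout is obtained by least squares, $W_{\mathrm{out}} = U R^{\top}(RR^{\top})^{-1} = U R^{\dagger}$ ($\dagger$ is the Moore–Penrose pseudoinverse), and the trained closed-loop system is $\dot r = ((-1+\omega)I + W_{\mathrm{in}}W_{\mathrm{out}}) r + \sigma_b \mathbf{1}_n$. By the variation of constants formula, $r(t_i) = W_{\mathrm{in}}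 b_1(t_i) + b_2(t_i)\mathbf{1}_n$ with $b_1(t_i) = \int_0^{t_i} e^{(\omega-1)(t_i-\tau)}u(\tau)\,d\tau \in\mathbb{R}^d$ and $b_2(t_i) = \sigma_b\big(e^{(\omega-1)t_i}-1\big)/(\omega-1)\in\mathbb{R}$; define $B_1 = [b_1(t_1)\cdots b_1(t_m)]$ and $B_2 = [b_2(t_1)\cdots b_2(t_m)]$. Data informativity assumption: (1) $u\in L^2([0,T];\mathbb{R}^d)$; (2) if $\sigma_b=0$, then $m\ge d$ and the components $u_1,\dots,u_d$ are linearly independent in $L^2([0,T];\mathbb{R})$; (3) if $\sigma_b\neq 0$, then $m\ge d+1$ and $u_1,\dots,u_d$ together with the constant function $1$ are linearly independent in $L^2([0,T];\mathbb{R})$. The sample times are assumed to lie outside the Lebesgue-measure-zero set on which the rows of $B_1$ and $B_2$ fail to be mutually linearly independent. Further assume $W_{\mathrm{in}}$ has full column rank $d$ and $\mathbf{1}_n\notin \operatorname{Im} W_{\mathrm{in}}$. *)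

theory Defs
  imports "HOL-Analysis.Analysis"
begin

text \<open>Moore--Penrose pseudoinverse, defined by the four Penrose conditions.\<close>
definition pinv :: "real^'m^'n \<Rightarrow> real^'n^'m" where
  "pinv A = (THE X. A ** X ** A = A \<and> X ** A ** X = X \<and>
                    transpose (A ** X) = A ** X \<and> transpose (X ** A) = X ** A)"

text \<open>All-ones vector.\<close>
definition ones :: "real^'n" where "ones = (\<chi> i. 1)"

text \<open>Reservoir state of r' = (-1+omega) r + W_in u + sigma_b 1, r(0)=0,
  given by the variation of constants formula (mild solution).\<close>
definition reservoir_state ::
  "real \<Rightarrow> real^'d^'n \<Rightarrow> real \<Rightarrow> (real \<Rightarrow> real^'d) \<Rightarrow> real \<Rightarrow> real^'n" where
  "reservoir_state omega Win sigma_b u t =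
     integral {0..t} (\<lambda>\<tau>. exp ((omega - 1) * (t - \<tau>)) *\<^sub>R (Win *v u \<tau> + sigma_b *\<^sub>R ones))"

definition b1 :: "real \<Rightarrow> (real \<Rightarrow> real^'d) \<Rightarrow> real \<Rightarrow> real^'d" where
  "b1 omega u t = integral {0..t} (\<lambda>\<tau>. exp ((omega - 1) * (t - \<tau>)) *\<^sub>R u \<tau>)"

definition b2 :: "real \<Rightarrow> real \<Rightarrow> real \<Rightarrow> real" where
  "b2 omega sigma_b t = sigma_b * (exp ((omega - 1) * t) - 1) / (omega - 1)"

text \<open>Snapshot matrices (columns indexed by sample index).\<close>
definition snap_U :: "(real \<Rightarrow> real^'d) \<Rightarrow> ('m \<Rightarrow> real) \<Rightarrow> real^'m^'d" where
  "snap_U u ts = (\<chi> k i. u (ts i) $ k)"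

definition snap_R :: "real \<Rightarrow> real^'d^'n \<Rightarrow> real \<Rightarrow> (real \<Rightarrow> real^'d) \<Rightarrow> ('m \<Rightarrow> real) \<Rightarrow> real^'m^'n" where
  "snap_R omega Win sigma_b u ts = (\<chi> j i. reservoir_state omega Win sigma_b u (ts i) $ j)"

definition snap_B1 :: "real \<Rightarrow> (real \<Rightarrow> real^'d) \<Rightarrow> ('m \<Rightarrow> real) \<Rightarrow> real^'m^'d" where
  "snap_B1 omega u ts = (\<chi> k i. b1 omega u (ts i) $ k)"

definition snap_B2 :: "real \<Rightarrow> real \<Rightarrow> ('m \<Rightarrow> real) \<Rightarrow> real^'m" where
  "snap_B2 omega sigma_b ts = (\<chi> i. b2 omega sigma_b (ts i))"

text \<open>Least-squares readout W_out = U R^T (R R^T)^{-1}.\<close>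
definition W_out :: "real^'m^'d \<Rightarrow> real^'m^'n \<Rightarrow> real^'n^'d" where
  "W_out U R = U ** transpose R ** matrix_inv (R ** transpose R)"

text \<open>Outer product x^T y of row vectors (an m x m matrix).\<close>
definition outer :: "real^'m \<Rightarrow> real^'m \<Rightarrow> real^'m^'m" where
  "outer x y = (\<chi> i j. x $ i * y $ j)"

end

theory Submission
  imports Defs
begin


lemma minv:
  fixes M :: "real^'n^'n"
  assumes "invertible M"
  shows "M ** matrix_inv M = mat 1" "matrix_inv M ** M = mat 1"
  using someI_ex[OF assms[unfolded invertible_def]] unfolding matrix_inv_def by auto

lemma minv_sym:
  fixes M :: "real^'n^'n"
  assumes "invertible M" "transpose M = M"
  shows "transpose (matrix_inv M) = matrix_inv M"
proof -
  let ?K = "matrix_inv M"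
  have "transpose ?K ** M = mat 1"
    using arg_cong[OF minv(1)[OF assms(1)], of transpose] assms(2)
    by (simp add: matrix_transpose_mul)
  then have "transpose ?K = transpose ?K ** (M ** ?K)" using minv(1)[OF assms(1)] by simp
  also have "\<dots> = (transpose ?K ** M) ** ?K" by (simp add: matrix_mul_assoc)
  also have "\<dots> = ?K" using \<open>transpose ?K ** M = mat 1\<close> by simp
  finally show ?thesis .
qed

lemma gram_invertible:
  fixes A :: "real^'m^'n"
  assumes "\<forall>c. c v* A = 0 \<longrightarrow> c = 0"
  shows "invertible (A ** transpose A)"
proof -
  have "\<forall>x. (A ** transpose A) *v x = 0 \<longrightarrow> x = 0"
  proof (intro allI impI)
    fix x assume h: "(A ** transpose A) *v x = 0"
    have "(x v* A) \<bullet> (x v* A) = x \<bullet> (A *v (x v* A))"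
      by (simp only: dot_lmul_matrix)
    also have "\<dots> = x \<bullet> (A *v (transpose A *v x))"
      by (simp only: transpose_matrix_vector)
    also have "\<dots> = x \<bullet> ((A ** transpose A) *v x)" by (simp only: matrix_vector_mul_assoc)
    also have "\<dots> = 0" using h by simp
    finally have "x v* A = 0" by simp
    then show "x = 0" using assms by blast
  qed
  then show ?thesis
    using matrix_left_invertible_ker invertible_left_inverse by blast
qed

lemma pinv_eq:
  fixes A :: "real^'m^'n" and X :: "real^'n^'m"
  assumes p1: "A ** X ** A = A" and p2: "X ** A ** X = X"
    and p3: "transpose (A ** X) = A ** X" and p4: "transpose (X ** A) = X ** A"
  shows "pinv A = X"
  unfolding pinv_def
proof (rule the_equality)
  show "A ** X ** A = A \<and> X ** A ** X = X \<and> transpose (A ** X) = A ** X \<and> transpose (X ** A) = X ** A"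
    using assms by blast
next
  fix Y assume "A ** Y ** A = A \<and> Y ** A ** Y = Y \<and> transpose (A ** Y) = A ** Y \<and> transpose (Y ** A) = Y ** A"
  then have q1: "A ** Y ** A = A" and q2: "Y ** A ** Y = Y"
    and q3: "transpose (A ** Y) = A ** Y" and q4: "transpose (Y ** A) = Y ** A" by auto
  have "Y = Y ** (A ** Y)" using q2 by (simp add: matrix_mul_assoc)
  also have "\<dots> = Y ** transpose (A ** Y)" using q3 by simp
  also have "\<dots> = Y ** transpose Y ** transpose (A ** X ** A)" using p1
    by (simp add: matrix_transpose_mul matrix_mul_assoc)
  also have "\<dots> = Y ** transpose (A ** Y) ** transpose (A ** X)"
    by (simp add: matrix_transpose_mul matrix_mul_assoc)
  also have "\<dots> = Y ** A ** Y ** A ** X" using q3 p3 by (simp add: matrix_mul_assoc)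
  also have "\<dots> = Y ** A ** X" using q2 by simp
  finally have y: "Y = Y ** A ** X" .
  have "X = (X ** A) ** X" using p2 by (simp add: matrix_mul_assoc)
  also have "\<dots> = transpose (X ** A) ** X" using p4 by simp
  also have "\<dots> = transpose (A ** Y ** A) ** transpose X ** X" using q1
    by (simp add: matrix_transpose_mul matrix_mul_assoc)
  also have "\<dots> = transpose (Y ** A) ** transpose (X ** A) ** X"
    by (simp add: matrix_transpose_mul matrix_mul_assoc)
  also have "\<dots> = Y ** A ** (X ** A ** X)" using q4 p4 by (simp add: matrix_mul_assoc)
  also have "\<dots> = Y ** A ** X" using p2 by simp
  finally show "Y = X" using y by simp
qed

lemma pinv_full_row:
  fixes A :: "real^'m^'n"
  assumes inv: "invertible (A ** transpose A)"
  shows "pinv A = transpose A ** matrix_inv (A ** transpose A)"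
    "A ** pinv A = mat 1"
    "transpose (pinv A) = matrix_inv (A ** transpose A) ** A"
proof -
  let ?K = "matrix_inv (A ** transpose A)"
  have K1: "A ** transpose A ** ?K = mat 1" using minv[OF inv] by simp
  have Ks: "transpose ?K = ?K" using minv_sym[OF inv] by (simp add: matrix_transpose_mul)
  have AX: "A ** (transpose A ** ?K) = mat 1" using K1 by (simp add: matrix_mul_assoc)
  show "pinv A = transpose A ** ?K"
  proof (rule pinv_eq)
    show "A ** (transpose A ** ?K) ** A = A" using AX by simp
    have "transpose A ** ?K ** A ** (transpose A ** ?K) = transpose A ** ?K ** (A ** (transpose A ** ?K))"
      by (simp only: matrix_mul_assoc)
    then show "transpose A ** ?K ** A ** (transpose A ** ?K) = transpose A ** ?K"
      using AX by simp
    show "transpose (A ** (transpose A ** ?K)) = A ** (transpose A ** ?K)" using AX by simp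
    show "transpose (transpose A ** ?K ** A) = transpose A ** ?K ** A"
      using Ks by (simp add: matrix_transpose_mul matrix_mul_assoc)
  qed
  then show "A ** pinv A = mat 1" using AX by simp
  show "transpose (pinv A) = ?K ** A"
    using \<open>pinv A = _\<close> Ks by (simp add: matrix_transpose_mul)
qed

lemma main_alg:
  fixes R :: "real^'m^'n" and Win :: "real^'d^'n" and X :: "real^'d^'m"
  assumes inv: "invertible (R ** transpose R)" and RX: "R ** X = Win"
    and ker: "\<forall>v. R *v v = 0 \<longrightarrow> v v* X = 0"
  shows "transpose R ** matrix_inv (R ** transpose R) ** Win = X"
proof -
  let ?K = "matrix_inv (R ** transpose R)"
  have K1: "R ** transpose R ** ?K = mat 1" using minv[OF inv] by simp
  show ?thesis unfolding matrix_eq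
  proof
    fix z
    define x where "x = X *v z"
    define w where "w = ?K *v (R *v x)"
    define y where "y = x - transpose R *v w"
    have "R *v y = R *v x - (R ** transpose R ** ?K) *v (R *v x)"
      by (simp add: y_def w_def matrix_vector_mul_assoc matrix_vector_mult_diff_distrib matrix_mul_assoc)
    then have Ry: "R *v y = 0" using K1 by simp
    have xy: "x \<bullet> y = 0"
    proof -
      have "x \<bullet> y = (z v* transpose X) \<bullet> y" by (simp add: x_def)
      also have "\<dots> = z \<bullet> (transpose X *v y)" by (rule dot_lmul_matrix)
      also have "\<dots> = 0" using ker Ry by simp
      finally show ?thesis .
    qed
    have wy: "(transpose R *v w) \<bullet> y = 0"
    proof -
      have "(transpose R *v w) \<bullet> y = (w v* R) \<bullet> y" by simp
      also have "\<dots> = w \<bullet> (R *v y)" by (rule dot_lmul_matrix)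
      finally show ?thesis using Ry by simp
    qed
    have "y \<bullet> y = 0" using xy wy unfolding y_def by (simp add: inner_diff_left inner_diff_right inner_commute)
    then have "y = 0" by simp
    then have "x = transpose R *v w" unfolding y_def by simp
    moreover have "(transpose R ** ?K ** Win) *v z = transpose R *v w"
      unfolding w_def x_def using RX[symmetric]
      by (simp add: matrix_vector_mul_assoc matrix_mul_assoc)
    ultimately show "(transpose R ** ?K ** Win) *v z = X *v z" by (simp add: x_def)
  qed
qed

lemma scaleR_mat_vec: "((k::real) *\<^sub>R (A::real^'n^'m)) *v x = k *\<^sub>R (A *v x)"
  using matrix_scaleR_vector_ac[of A k x] matrix_vector_mult_scaleR[of A k x] by simp

lemma outer_vec: "outer x y *v z = (y \<bullet> z) *\<^sub>R x"
  apply (simp add: vec_eq_iff matrix_vector_mult_def outer_def inner_vec_def)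
  apply (intro allI)
  subgoal for i
    using sum_distrib_left[of "x$i" "\<lambda>j. y$j*z$j" UNIV] by (simp add: mult_ac)
  done

lemma vec_outer: "z v* outer x y = (z \<bullet> x) *\<^sub>R y"
  unfolding vec_eq_iff vector_matrix_mult_def outer_def inner_vec_def
  by (simp add: sum_distrib_right mult.assoc)

lemma Rv:
  fixes Win :: "real^'d^'n" and B1 :: "real^'m^'d" and B2 :: "real^'m"
  shows "(Win ** B1 + (\<chi> j i. B2 $ i)) *v w = Win *v (B1 *v w) + (B2 \<bullet> w) *\<^sub>R ones"
proof -
  have "(\<chi> j i. B2 $ i) *v w = (B2 \<bullet> w) *\<^sub>R (ones :: real^'n)"
    by (simp add: vec_eq_iff matrix_vector_mult_def inner_vec_def ones_def mult.commute)
  then show ?thesis by (simp add: matrix_vector_mult_add_rdistrib matrix_vector_mul_assoc)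
qed

lemma transpose_diff: "transpose (A - B) = transpose A - transpose (B :: real^'n^'m)"
  by (simp add: transpose_def vec_eq_iff)

lemma case1_alg:
  fixes Win :: "real^'d^'n" and B1 :: "real^'m^'d" and B2 :: "real^'m" and R :: "real^'m^'n"
  assumes Rdef: "R = Win ** B1 + (\<chi> j i. B2 $ i)"
    and invR: "invertible (R ** transpose R)"
    and gB1: "\<forall>c. c v* B1 = 0 \<longrightarrow> c = 0"
    and gB12: "\<forall>(c::real^'d) (c0::real). c v* B1 + c0 *\<^sub>R B2 = 0 \<longrightarrow> c = 0 \<and> c0 = 0"
    and Winj: "\<forall>(c::real^'d) (c0::real). Win *v c + c0 *\<^sub>R ones = 0 \<longrightarrow> c = 0 \<and> c0 = 0"
  shows "transpose R ** matrix_inv (R ** transpose R) ** Win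
       = (mat 1 - inverse (B2 \<bullet> ((mat 1 - pinv B1 ** B1) *v B2)) *\<^sub>R ((mat 1 - pinv B1 ** B1) ** outer B2 B2)) ** pinv B1"
proof -
  define Pi where "Pi = pinv B1"
  define K where "K = matrix_inv (B1 ** transpose B1)"
  define P where "P = mat 1 - Pi ** B1"
  define s where "s = B2 \<bullet> (P *v B2)"
  have invB: "invertible (B1 ** transpose B1)" using gram_invertible[OF gB1] .
  have Pi_def': "Pi = transpose B1 ** K" and BPi: "B1 ** Pi = mat 1" and PiT: "transpose Pi = K ** B1"
    using pinv_full_row[OF invB] unfolding Pi_def K_def by auto
  have Pv: "P *v w = w - Pi *v (B1 *v w)" for w
    by (simp add: P_def matrix_vector_mult_diff_rdistrib matrix_vector_mul_assoc)
  have B1P: "B1 *v (P *v w) = 0" for w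
    by (simp add: Pv matrix_vector_mult_diff_distrib matrix_vector_mul_assoc BPi matrix_mul_assoc)
  have PtP: "transpose P = P"
    unfolding P_def transpose_diff matrix_transpose_mul PiT transpose_mat
    by (simp add: Pi_def' matrix_mul_assoc)
  have PP: "P *v (P *v w) = P *v w" for w
    using Pv[of "P *v w"] B1P[of w] by simp
  have vP: "w v* P = P *v w" for w
    using transpose_matrix_vector[of P w] PtP by simp
  have s_sq: "s = (P *v B2) \<bullet> (P *v B2)"
  proof -
    have "s = B2 \<bullet> (P *v (P *v B2))" unfolding s_def PP ..
    also have "\<dots> = (B2 v* P) \<bullet> (P *v B2)" by (rule dot_lmul_matrix[symmetric])
    finally show ?thesis by (simp add: vP)
  qed
  have Piv: "Pi *v y = (y v* K) v* B1" for y
  proof -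
    have "Pi *v y = y v* transpose Pi" by (simp only: vector_transpose_matrix)
    also have "\<dots> = y v* (K ** B1)" by (simp only: PiT)
    also have "\<dots> = (y v* K) v* B1" by (simp only: vector_matrix_mul_assoc)
    finally show ?thesis .
  qed
  have s0: "s \<noteq> 0"
  proof
    assume "s = 0"
    then have "P *v B2 = 0" using s_sq by simp
    then have "B2 = Pi *v (B1 *v B2)" using Pv[of B2] by simp
    then have eq: "((B1 *v B2) v* K) v* B1 + (-1) *\<^sub>R B2 = 0" using Piv by simp
    have "((B1 *v B2) v* K) = 0 \<and> (-1::real) = 0"
      by (rule gB12[rule_format, OF eq])
    then show False by simp
  qed
  define c where "c = inverse s"
  define X where "X = (mat 1 - c *\<^sub>R (P ** outer B2 B2)) ** Pi"
  have Xv: "X *v z = Pi *v z - (c * (B2 \<bullet> (Pi *v z))) *\<^sub>R (P *v B2)" for z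
    unfolding X_def
    by (simp add: matrix_vector_mul_assoc[symmetric] matrix_vector_mult_diff_rdistrib scaleR_mat_vec
        outer_vec matrix_vector_mult_scaleR)
  have B1P': "(B1 ** P) *v w = 0" for w using B1P[of w] by (simp add: matrix_vector_mul_assoc)
  have B1X: "B1 *v (X *v z) = z" for z
    by (simp add: B1P' Xv matrix_vector_mult_diff_distrib matrix_vector_mult_scaleR B1P
        matrix_vector_mul_assoc BPi)
  have B2X: "B2 \<bullet> (X *v z) = 0" for z
    using s0 by (simp add: Xv inner_diff_right c_def s_def[symmetric])
  have RRv: "R *v w = Win *v (B1 *v w) + (B2 \<bullet> w) *\<^sub>R ones" for w
    unfolding Rdef by (rule Rv)
  have RX: "R ** X = Win"
    unfolding matrix_eq
    by (simp add: matrix_vector_mul_assoc[symmetric] RRv B1X B2X)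
  have ker: "\<forall>v. R *v v = 0 \<longrightarrow> v v* X = 0"
  proof (intro allI impI)
    fix v assume "R *v v = 0"
    then have "Win *v (B1 *v v) + (B2 \<bullet> v) *\<^sub>R ones = 0" by (simp add: RRv)
    then have h1: "B1 *v v = 0" and h2: "B2 \<bullet> v = 0" using Winj by blast+
    have vPi: "v v* Pi = 0"
    proof -
      have "v v* Pi = transpose Pi *v v" by (simp only: transpose_matrix_vector)
      also have "\<dots> = (K ** B1) *v v" by (simp only: PiT)
      also have "\<dots> = K *v (B1 *v v)" by (simp only: matrix_vector_mul_assoc)
      finally show ?thesis using h1 by simp
    qed
    have vPv: "v v* P = v" using vP Pv h1 by simp
    have "v v* X = (v v* (mat 1 - c *\<^sub>R (P ** outer B2 B2))) v* Pi"
      unfolding X_def by (rule vector_matrix_mul_assoc[symmetric])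
    also have "v v* (mat 1 - c *\<^sub>R (P ** outer B2 B2)) = v - c *\<^sub>R ((v v* P) v* outer B2 B2)"
      by (simp add: vector_matrix_mult_diff_rdistrib vector_scaleR_matrix_ac vector_matrix_mul_assoc)
    also have "\<dots> = v" by (simp add: vPv vec_outer inner_commute h2)
    finally show "v v* X = 0" using vPi by simp
  qed
  have "transpose R ** matrix_inv (R ** transpose R) ** Win = X"
    by (rule main_alg[OF invR RX ker])
  then show ?thesis unfolding X_def c_def s_def P_def Pi_def .
qed

lemma case0_alg:
  fixes Win :: "real^'d^'n" and B1 :: "real^'m^'d" and R :: "real^'m^'n"
  assumes Rdef: "R = Win ** B1"
    and invR: "invertible (R ** transpose R)"
    and gB1: "\<forall>c. c v* B1 = 0 \<longrightarrow> c = 0"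
    and Winj: "\<forall>c. Win *v c = 0 \<longrightarrow> c = 0"
  shows "transpose R ** matrix_inv (R ** transpose R) ** Win = pinv B1"
proof -
  define K where "K = matrix_inv (B1 ** transpose B1)"
  have invB: "invertible (B1 ** transpose B1)" using gram_invertible[OF gB1] .
  have Pi_def': "pinv B1 = transpose B1 ** K" and BPi: "B1 ** pinv B1 = mat 1"
    and PiT: "transpose (pinv B1) = K ** B1"
    using pinv_full_row[OF invB] unfolding K_def by auto
  have RX: "R ** pinv B1 = Win" unfolding Rdef by (simp add: matrix_mul_assoc[symmetric] BPi)
  have ker: "\<forall>v. R *v v = 0 \<longrightarrow> v v* pinv B1 = 0"
  proof (intro allI impI)
    fix v assume "R *v v = 0"
    then have "Win *v (B1 *v v) = 0" by (simp add: Rdef matrix_vector_mul_assoc)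
    then have h1: "B1 *v v = 0" using Winj by blast
    show "v v* pinv B1 = 0"
    proof -
      have "v v* pinv B1 = transpose (pinv B1) *v v" by (simp only: transpose_matrix_vector)
      also have "\<dots> = (K ** B1) *v v" by (simp only: PiT)
      also have "\<dots> = K *v (B1 *v v)" by (simp only: matrix_vector_mul_assoc)
      finally show ?thesis using h1 by simp
    qed
  qed
  show ?thesis by (rule main_alg[OF invR RX ker])
qed




lemma u_abs_int:
  fixes u :: "real \<Rightarrow> real^'d"
  assumes m: "u measurable_on {0..T}" and i: "(\<lambda>t. (norm (u t))\<^sup>2) integrable_on {0..T}"
  shows "u absolutely_integrable_on {0..T}"
proof (rule measurable_bounded_by_integrable_imp_absolutely_integrable)
  show "u \<in> borel_measurable (lebesgue_on {0..T})"
    by (rule measurable_on_imp_borel_measurable_lebesgue[OF m]) simp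
  show "{0..T} \<in> sets lebesgue" by simp
  show "(\<lambda>t. 1 + (norm (u t))\<^sup>2) integrable_on {0..T}"
    by (rule integrable_add[OF _ i]) auto
  show "norm (u x) \<le> 1 + (norm (u x))\<^sup>2" for x
  proof -
    have "0 \<le> (norm (u x) - 1)\<^sup>2" by simp
    then show ?thesis by (simp add: power2_diff) (smt (verit) norm_ge_zero)
  qed
qed

lemma e_int:
  fixes u :: "real \<Rightarrow> real^'d"
  assumes ua: "u absolutely_integrable_on {0..T}" and t: "t \<in> {0..T}"
  shows "(\<lambda>\<tau>. exp (c * (t - \<tau>)) *\<^sub>R u \<tau>) integrable_on {0..t}"
proof -
  have ut: "u absolutely_integrable_on {0..t}"
    using absolutely_integrable_on_subinterval[OF ua] t by auto
  have ct: "continuous_on {0..t} (\<lambda>\<tau>. exp (c * (t - \<tau>)))"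
    by (intro continuous_intros)
  have "(\<lambda>\<tau>. exp (c * (t - \<tau>)) *\<^sub>R u \<tau>) absolutely_integrable_on {0..t}"
  proof (rule absolutely_integrable_bounded_measurable_product[OF bilinear_conv_bounded_bilinear[THEN iffD2, OF bounded_bilinear_scaleR]])
    show "(\<lambda>\<tau>. exp (c * (t - \<tau>))) \<in> borel_measurable (lebesgue_on {0..t})"
      by (rule continuous_imp_measurable_on_sets_lebesgue[OF ct]) simp
    show "{0..t} \<in> sets lebesgue" by simp
    show "bounded ((\<lambda>\<tau>. exp (c * (t - \<tau>))) ` {0..t})"
      by (rule compact_imp_bounded[OF compact_continuous_image[OF ct]]) simp
    show "u absolutely_integrable_on {0..t}" by (rule ut)
  qed
  then show ?thesis using absolutely_integrable_on_def by blast
qed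

lemma b2_int:
  fixes omega sg t :: real
  assumes "omega < 1" "0 \<le> t"
  shows "((\<lambda>\<tau>. exp ((omega - 1) * (t - \<tau>)) * sg) has_integral b2 omega sg t) {0..t}"
proof -
  define k where "k = - sg / (omega - 1)"
  define F where "F = (\<lambda>\<tau>. k * exp ((omega - 1) * (t - \<tau>)))"
  have om: "omega - 1 \<noteq> 0" using assms(1) by simp
  have "((\<lambda>\<tau>. exp ((omega - 1) * (t - \<tau>)) * sg) has_integral (F t - F 0)) {0..t}"
  proof (rule fundamental_theorem_of_calculus[OF assms(2)])
    fix x assume "x \<in> {0..t}"
    have "(F has_real_derivative k * (exp ((omega - 1) * (t - x)) * ((omega - 1) * (0 - 1)))) (at x within {0..t})"
      unfolding F_def by (auto intro!: derivative_eq_intros)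
    moreover have "k * (exp ((omega - 1) * (t - x)) * ((omega - 1) * (0 - 1))) = exp ((omega - 1) * (t - x)) * sg"
      unfolding k_def using om by (simp add: field_simps)
    ultimately have "(F has_real_derivative exp ((omega - 1) * (t - x)) * sg) (at x within {0..t})"
      by metis
    then show "(F has_vector_derivative exp ((omega - 1) * (t - x)) * sg) (at x within {0..t})"
      by (simp add: has_real_derivative_iff_has_vector_derivative)
  qed
  moreover have "F t - F 0 = b2 omega sg t"
  proof -
    have "F t - F 0 = k * (1 - exp ((omega - 1) * t))" by (simp add: F_def right_diff_distrib)
    also have "\<dots> = sg * (exp ((omega - 1) * t) - 1) / (omega - 1)"
      unfolding k_def by (simp add: divide_inverse algebra_simps)
    finally show ?thesis unfolding b2_def .
  qed
  ultimately show ?thesis by simp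
qed

lemma reservoir_decomp:
  fixes u :: "real \<Rightarrow> real^'d" and Win :: "real^'d^'n"
  assumes ua: "u absolutely_integrable_on {0..T}" and t: "t \<in> {0..T}" and om: "omega < 1"
  shows "reservoir_state omega Win sg u t = Win *v b1 omega u t + b2 omega sg t *\<^sub>R ones"
proof -
  let ?e = "\<lambda>\<tau>. exp ((omega - 1) * (t - \<tau>))"
  have i1: "(\<lambda>\<tau>. ?e \<tau> *\<^sub>R u \<tau>) integrable_on {0..t}" by (rule e_int[OF ua t])
  have bl: "bounded_linear ((*v) Win)"
    using matrix_vector_mul_linear linear_conv_bounded_linear by blast
  have h2: "((\<lambda>\<tau>. (?e \<tau> * sg) *\<^sub>R (ones::real^'n)) has_integral b2 omega sg t *\<^sub>R ones) {0..t}"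
    by (rule has_integral_scaleR_left[OF b2_int[OF om]]) (use t in auto)
  have eq: "(\<lambda>\<tau>. ?e \<tau> *\<^sub>R (Win *v u \<tau> + sg *\<^sub>R ones)) =
      (\<lambda>\<tau>. ((*v) Win \<circ> (\<lambda>\<tau>. ?e \<tau> *\<^sub>R u \<tau>)) \<tau> + (?e \<tau> * sg) *\<^sub>R ones)"
    by (auto simp: o_def matrix_vector_mult_scaleR scaleR_add_right)
  have "reservoir_state omega Win sg u t =
      integral {0..t} ((*v) Win \<circ> (\<lambda>\<tau>. ?e \<tau> *\<^sub>R u \<tau>)) + integral {0..t} (\<lambda>\<tau>. (?e \<tau> * sg) *\<^sub>R (ones::real^'n))"
    unfolding reservoir_state_def eq
    by (rule integral_add[OF integrable_linear[OF i1 bl] has_integral_integrable[OF h2]])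
  also have "\<dots> = Win *v b1 omega u t + b2 omega sg t *\<^sub>R ones"
    using integral_linear[OF i1 bl] h2 unfolding b1_def by (simp add: has_integral_iff)
  finally show ?thesis .
qed


theorem lemma1:
  fixes u :: "real \<Rightarrow> real^('d::finite)"
    and Win :: "real^('d::finite)^('n::finite)"
    and ts :: "('m::finite) \<Rightarrow> real"
    and omega sigma_b T h t1 :: real
    and idx :: "'m \<Rightarrow> nat"
  defines "U \<equiv> snap_U u ts"
    and "R \<equiv> snap_R omega Win sigma_b u ts"
    and "B1 \<equiv> snap_B1 omega u ts"
    and "B2 \<equiv> snap_B2 omega sigma_b ts"
  assumes omega: "omega < 1"
    and times_in: "\<forall>i. ts i \<in> {0..T}"
    and equispaced: "h > 0" "bij_betw idx UNIV {..<CARD('m)}" "\<forall>i. ts i = t1 + h * real (idx i)"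
    and u_L2: "u measurable_on {0..T}" "(\<lambda>t. (norm (u t))\<^sup>2) integrable_on {0..T}"
    and informative0: "sigma_b = 0 \<Longrightarrow> CARD('m) \<ge> CARD('d) \<and>
           (\<forall>c::real^'d. negligible {t \<in> {0..T}. c \<bullet> u t \<noteq> 0} \<longrightarrow> c = 0)"
    and informative1: "sigma_b \<noteq> 0 \<Longrightarrow> CARD('m) \<ge> CARD('d) + 1 \<and>
           (\<forall>(c::real^'d) (c0::real). negligible {t \<in> {0..T}. c \<bullet> u t + c0 \<noteq> 0} \<longrightarrow> c = 0 \<and> c0 = 0)"
    and generic_B1: "\<forall>c::real^'d. c v* B1 = 0 \<longrightarrow> c = 0"
    and generic_B12: "sigma_b \<noteq> 0 \<Longrightarrow>
           (\<forall>(c::real^'d) (c0::real). c v* B1 + c0 *\<^sub>R B2 = 0 \<longrightarrow> c = 0 \<and> c0 = 0)"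
    and R_rank: "rank R = CARD('n)"
    and Win_rank: "rank Win = CARD('d)"
    and ones_notin: "(ones :: real^'n) \<notin> range ((*v) Win)"
  shows "(sigma_b \<noteq> 0 \<longrightarrow>
            (let s = B2 \<bullet> ((mat 1 - pinv B1 ** B1) *v B2)
             in W_out U R ** Win
                  = U ** (mat 1 - inverse s *\<^sub>R ((mat 1 - pinv B1 ** B1) ** outer B2 B2)) ** pinv B1))
       \<and> (sigma_b = 0 \<longrightarrow> W_out U R ** Win = U ** pinv B1)"
  proof -
  have ua: "u absolutely_integrable_on {0..T}" by (rule u_abs_int[OF u_L2])
  have Rdec: "R = Win ** B1 + (\<chi> j i. B2 $ i)"
  proof -
    have comp: "reservoir_state omega Win sigma_b u (ts i) = Win *v b1 omega u (ts i) + b2 omega sigma_b (ts i) *\<^sub>R ones" for i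
      by (rule reservoir_decomp[OF ua times_in[rule_format] omega])
    have "R $ j $ i = (Win ** B1 + (\<chi> j i. B2 $ i)) $ j $ i" for j i
    proof -
      have "(Win ** B1) $ j $ i = (Win *v b1 omega u (ts i)) $ j"
        unfolding B1_def snap_B1_def matrix_matrix_mult_def matrix_vector_mult_def by simp
      then show ?thesis unfolding R_def snap_R_def B2_def snap_B2_def comp by (simp add: ones_def)
    qed
    then show ?thesis by (simp add: vec_eq_iff)
  qed
  have "rank (transpose R) = CARD('n)" using R_rank by (simp only: rank_transpose)
  then have injR: "inj ((*v) (transpose R))" by (simp only: full_rank_injective)
  have "\<forall>c. c v* R = 0 \<longrightarrow> c = 0"
  proof (intro allI impI)
    fix c :: "real^'n" assume "c v* R = 0"
    then have "transpose R *v c = transpose R *v 0" by simp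
    then show "c = 0" by (rule injD[OF injR])
  qed
  then have invR: "invertible (R ** transpose R)" by (rule gram_invertible)
  have injW: "inj ((*v) Win)" using Win_rank by (simp only: full_rank_injective)
  have Winj0: "\<forall>c. Win *v c = 0 \<longrightarrow> c = 0"
  proof (intro allI impI)
    fix c :: "real^'d" assume "Win *v c = 0"
    then have "Win *v c = Win *v 0" by simp
    then show "c = 0" by (rule injD[OF injW])
  qed
  have WR: "W_out U R ** Win = U ** (transpose R ** matrix_inv (R ** transpose R) ** Win)"
    unfolding W_out_def by (simp add: matrix_mul_assoc)
  show ?thesis
  proof (intro conjI impI)
    assume sg: "sigma_b \<noteq> 0"
    have Winj: "\<forall>(c::real^'d) (c0::real). Win *v c + c0 *\<^sub>R ones = 0 \<longrightarrow> c = 0 \<and> c0 = 0"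
    proof (intro allI impI)
      fix c :: "real^'d" and c0 :: real
      assume h: "Win *v c + c0 *\<^sub>R ones = 0"
      have "c0 = 0"
      proof (rule ccontr)
        assume "c0 \<noteq> 0"
        have wc: "Win *v c = - (c0 *\<^sub>R ones)" using h by (simp add: eq_neg_iff_add_eq_0)
        have "Win *v ((- inverse c0) *\<^sub>R c) = (- inverse c0) *\<^sub>R (Win *v c)"
          by (rule matrix_vector_mult_scaleR)
        also have "\<dots> = ones" using wc \<open>c0 \<noteq> 0\<close> by simp
        finally have "ones = Win *v ((- inverse c0) *\<^sub>R c)" by simp
        then show False using ones_notin by auto
      qed
      then show "c = 0 \<and> c0 = 0" using h Winj0 by simp
    qed
    have "transpose R ** matrix_inv (R ** transpose R) ** Win
       = (mat 1 - inverse (B2 \<bullet> ((mat 1 - pinv B1 ** B1) *v B2)) *\<^sub>R ((mat 1 - pinv B1 ** B1) ** outer B2 B2)) ** pinv B1"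
      by (rule case1_alg[OF Rdec invR generic_B1 generic_B12[OF sg] Winj])
    then show "let s = B2 \<bullet> ((mat 1 - pinv B1 ** B1) *v B2)
             in W_out U R ** Win
                  = U ** (mat 1 - inverse s *\<^sub>R ((mat 1 - pinv B1 ** B1) ** outer B2 B2)) ** pinv B1"
      unfolding Let_def WR by (simp add: matrix_mul_assoc)
  next
    assume sg: "sigma_b = 0"
    have "B2 = 0" unfolding B2_def snap_B2_def b2_def sg by (simp add: vec_eq_iff)
    then have "R = Win ** B1" using Rdec by (simp add: vec_eq_iff)
    then have "transpose R ** matrix_inv (R ** transpose R) ** Win = pinv B1"
      by (rule case0_alg[OF _ invR generic_B1 Winj0])
    then show "W_out U R ** Win = U ** pinv B1" unfolding WR by simp
  qed
qed

end
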